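(* For a two-port FAS ($N=2$) with correlation parameter $\mu=\mu_2\in(0,1)$, the level crossing rate of $|h_{\rm FAS}|=\max\{|h_1|,|h_2|\}$ at threshold $x_{\rm th}>0$ is $$L(x_{\rm th})=\frac{2\sqrt{2\pi}\, f_D\,x_{\rm th}}{\sigma ^{3}(1-\mu^{2})}\, e^{-\frac {x_{\rm th}^2}{\sigma ^{2}(1-\mu^2)}} \sum_{k=0}^{\infty} \frac{\left(\mu x_{\rm th}\right)^{2k}}{(k!)^2 \left( \sigma ^{2}(1-\mu^2) \right)^{k-1}}\,\gamma \!\left( k+1, \frac{x_{\rm th}^2}{\sigma ^{2}(1-\mu^2)} \right),$$ where $\gamma(\cdot,\cdot)$ is the lower incomplete Gamma function.
   Context: Two-port FAS channel model: $h_1=\sigma x_0+j\sigma y_0$, $h_2=\sigma(\sqrt{1-\mu^2}\,x_2+\mu x_0)+j\sigma(\sqrt{1-\mu^2}\,y_2+\mu y_0)$, with $x_0,x_2,y_0,y_2$ independent real Gaussian with mean $0$ and variance $1/2$, $\sigma>0$. The joint envelope density is $p_{|h_1|,|h_2|}(x_1,x_2)=\frac{4x_1x_2}{\sigma^4(1-\mu^2)}e^{-\frac{x_1^2+x_2^2}{\sigma^2(1-\mu^2)}}I_0\!\left(\frac{2\mu x_1x_2}{\sigma^2(1-\mu^2)}\right)$ for $x_1,x_2\ge0$, $I_0$ the zero-order modified Bessel function of the first kind. Level crossing rate: the time derivative $|\dot h_i|$ of each port envelope is modeled as zero-mean Gaussian with density $p_{|\dot h_i|}$ and variance $\pi^2\sigma^2f_D^2$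 ($f_D$ the maximum Doppler frequency); the joint density of derivative and value of the selected envelope is $p_{|\dot h|,|h|}(\dot x,x)=p_{|\dot h_1|}(\dot x)\int_0^x p_{|h_1|,|h_2|}(x,x_2)\,dx_2+p_{|\dot h_2|}(\dot x)\int_0^x p_{|h_1|,|h_2|}(x_1,x)\,dx_1$, and the LCR is $L(x_{\rm th})=\int_0^\infty \dot x\,p_{|\dot h|,|h|}(\dot x,x_{\rm th})\,d\dot x$. *)

theory Defs
  imports "HOL-Analysis.Analysis" "HOL-Probability.Probability"
begin

definition bessel_I0 :: "real \<Rightarrow> real" where
  "bessel_I0 z = (\<Sum>k. (z / 2) ^ (2 * k) / (fact k)\<^sup>2)"

definition lower_inc_gamma :: "real \<Rightarrow> real \<Rightarrow> real" where
  "lower_inc_gamma s x = integral {0..x} (\<lambda>t. t powr (s - 1) * exp (- t))"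

definition fas_joint_pdf :: "real \<Rightarrow> real \<Rightarrow> real \<Rightarrow> real \<Rightarrow> real" where
  "fas_joint_pdf \<sigma> \<mu> x1 x2 =
     (if 0 \<le> x1 \<and> 0 \<le> x2 then
        4 * x1 * x2 / (\<sigma> ^ 4 * (1 - \<mu>\<^sup>2))
        * exp (- (x1\<^sup>2 + x2\<^sup>2) / (\<sigma>\<^sup>2 * (1 - \<mu>\<^sup>2)))
        * bessel_I0 (2 * \<mu> * x1 * x2 / (\<sigma>\<^sup>2 * (1 - \<mu>\<^sup>2)))
      else 0)"

text \<open>Density of the envelope derivative of port i: zero-mean Gaussian with variance
  pi^2 sigma^2 f_D^2 (same for both ports).\<close>
definition fas_deriv_pdf :: "real \<Rightarrow> real \<Rightarrow> real \<Rightarrow> real" where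
  "fas_deriv_pdf \<sigma> fD xd = normal_density 0 (pi * \<sigma> * fD) xd"

text \<open>Joint density of derivative and value of the selected envelope max(|h1|,|h2|).\<close>
definition fas_sel_joint_pdf :: "real \<Rightarrow> real \<Rightarrow> real \<Rightarrow> real \<Rightarrow> real \<Rightarrow> real" where
  "fas_sel_joint_pdf \<sigma> \<mu> fD xd x =
     fas_deriv_pdf \<sigma> fD xd * integral {0..x} (\<lambda>x2. fas_joint_pdf \<sigma> \<mu> x x2)
   + fas_deriv_pdf \<sigma> fD xd * integral {0..x} (\<lambda>x1. fas_joint_pdf \<sigma> \<mu> x1 x)"

definition fas_lcr :: "real \<Rightarrow> real \<Rightarrow> real \<Rightarrow> real \<Rightarrow> real" where
  "fas_lcr \<sigma> \<mu> fD xth = integral {0..} (\<lambda>xd. xd * fas_sel_joint_pdf \<sigma> \<mu> fD xd xth)"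

end

theory Submission
  imports Defs "HOL-Real_Asymp.Real_Asymp"
begin


lemma series_integral:
  fixes f :: "nat \<Rightarrow> real \<Rightarrow> real" and M :: "nat \<Rightarrow> real"
  assumes cont: "\<And>k. continuous_on {a..b} (f k)"
    and bound: "\<And>k y. y \<in> {a..b} \<Longrightarrow> \<bar>f k y\<bar> \<le> M k"
    and sm: "summable M"
  shows "(\<lambda>k. integral {a..b} (f k)) sums integral {a..b} (\<lambda>y. \<Sum>k. f k y)"
proof -
  have u: "uniform_limit {a..b} (\<lambda>n y. \<Sum>k<n. f k y) (\<lambda>y. \<Sum>k. f k y) sequentially"
    by (rule Weierstrass_m_test) (use bound sm in auto)
  have c: "\<And>n. continuous_on {a..b} (\<lambda>y. \<Sum>k<n. f k y)"
    by (intro continuous_intros cont)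
  obtain I J where I: "\<And>n. ((\<lambda>y. \<Sum>k<n. f k y) has_integral I n) {a..b}"
    and J: "((\<lambda>y. \<Sum>k. f k y) has_integral J) {a..b}" and lim: "I \<longlonglongrightarrow> J"
    using uniform_limit_integral[OF u c] by auto
  have "I n = (\<Sum>k<n. integral {a..b} (f k))" for n
  proof -
    have "I n = integral {a..b} (\<lambda>y. \<Sum>k<n. f k y)" using I[of n] by (simp add: integral_unique)
    also have "\<dots> = (\<Sum>k<n. integral {a..b} (f k))"
      by (rule integral_sum) (auto intro: integrable_continuous_real cont)
    finally show ?thesis .
  qed
  then have "I = (\<lambda>n. \<Sum>k<n. integral {a..b} (f k))" by auto
  moreover have "J = integral {a..b} (\<lambda>y. \<Sum>k. f k y)" using J by (simp add: integral_unique)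
  ultimately show ?thesis using lim unfolding sums_def by simp
qed



lemma half_normal_moment:
  fixes s :: real assumes s: "s > 0"
  shows "((\<lambda>x. x * normal_density 0 s x) has_integral s / sqrt (2 * pi)) {0..}"
proof -
  let ?F = "\<lambda>x. - s\<^sup>2 * normal_density 0 s x"
  have nd: "normal_density 0 s x = 1 / sqrt (2 * pi * s\<^sup>2) * exp (- x\<^sup>2 / (2 * s\<^sup>2))" for x
    by (simp add: normal_density_def)
  have der: "DERIV ?F x :> x * normal_density 0 s x" for x
  proof -
    have e: "DERIV (\<lambda>x. exp (- x\<^sup>2 / (2 * s\<^sup>2))) x :> exp (- x\<^sup>2 / (2 * s\<^sup>2)) * (- (2 * x) / (2 * s\<^sup>2))"
      by (intro DERIV_fun_exp derivative_intros) (use s in \<open>auto intro!: derivative_eq_intros simp: power2_eq_square power4_eq_xxxx\<close>)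
    show ?thesis unfolding nd
      using DERIV_cmult[OF e, of "- s\<^sup>2 * (1 / sqrt (2 * pi * s\<^sup>2))"] s
      by (simp add: field_simps power2_eq_square)
  qed
  have lim: "(?F \<longlongrightarrow> 0) at_top"
  proof -
    have "((\<lambda>x. exp (- x\<^sup>2 / (2 * s\<^sup>2))) \<longlongrightarrow> 0) at_top"
      using s by real_asymp
    then have "((\<lambda>x. - s\<^sup>2 * (1 / sqrt (2 * pi * s\<^sup>2) * exp (- x\<^sup>2 / (2 * s\<^sup>2)))) \<longlongrightarrow> - s\<^sup>2 * (1 / sqrt (2 * pi * s\<^sup>2) * 0)) at_top"
      by (intro tendsto_intros)
    then show ?thesis unfolding nd by simp
  qed
  have F0: "0 - ?F 0 = s / sqrt (2 * pi)"
    using s by (simp add: nd real_sqrt_mult field_simps power2_eq_square)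
  have "(\<integral>\<^sup>+x. ennreal (x * normal_density 0 s x) * indicator {0 ..} x \<partial>lborel) = ennreal (0 - ?F 0)"
    by (rule nn_integral_FTC_atLeast[OF _ der _ lim]) auto
  moreover have "(\<integral>\<^sup>+x. ennreal (x * normal_density 0 s x * indicator {0..} x) \<partial>lborel) = (\<integral>\<^sup>+x. ennreal (x * normal_density 0 s x) * indicator {0 ..} x \<partial>lborel)"
    by (intro nn_integral_cong) (auto split: split_indicator)
  ultimately have "has_bochner_integral lborel (\<lambda>x. x * normal_density 0 s x * indicator {0..} x) (s / sqrt (2 * pi))"
    unfolding F0
    by (intro has_bochner_integral_nn_integral) (use s in \<open>auto split: split_indicator\<close>)
  note hb = this
  then have "((\<lambda>x. x * normal_density 0 s x * indicator {0..} x) has_integral s / sqrt (2 * pi)) UNIV"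
    using has_integral_integral_real[of "\<lambda>x. x * normal_density 0 s x * indicator {0..} x"] hb
    unfolding has_bochner_integral_iff by simp
  then show ?thesis
    by (subst has_integral_restrict_UNIV[symmetric]) (simp add: indicator_def of_bool_def if_distrib cong: if_cong)
qed



lemma lig_eq:
  fixes u :: real and k :: nat assumes "u \<ge> 0"
  shows "lower_inc_gamma (real k + 1) u = integral {0..u} (\<lambda>t. t ^ k * exp (- t))"
  unfolding lower_inc_gamma_def
proof (rule integral_spike[of "{0}"])
  show "negligible {0::real}" by simp
  show "t ^ k * exp (- t) = t powr (real k + 1 - 1) * exp (- t)" if "t \<in> {0..u} - {0}" for t
    using that by (auto simp: powr_realpow)
qed

lemma subst_gamma:
  fixes a x :: real and k :: nat assumes a: "a > 0" and x: "x \<ge> 0"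
  shows "((\<lambda>y. y ^ (2 * k + 1) * exp (- y\<^sup>2 / a)) has_integral a ^ (k + 1) / 2 * lower_inc_gamma (real k + 1) (x\<^sup>2 / a)) {0..x}"
proof -
  let ?f = "\<lambda>t::real. t ^ k * exp (- t)"
  have "((\<lambda>y. (2 * y / a) *\<^sub>R ?f (y\<^sup>2 / a)) has_integral integral {(0::real)\<^sup>2 / a..x\<^sup>2 / a} ?f) {0..x}"
  proof (rule has_integral_substitution[where c = 0 and d = "x\<^sup>2 / a"])
    show "0 \<le> x" by fact
    show "0\<^sup>2 / a \<le> x\<^sup>2 / a" using a by simp
    show "(\<lambda>y. y\<^sup>2 / a) ` {0..x} \<subseteq> {0..x\<^sup>2 / a}"
      using a by (auto intro!: divide_right_mono power_mono)
    show "continuous_on {0..x\<^sup>2 / a} ?f" by (intro continuous_intros)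
    show "((\<lambda>y. y\<^sup>2 / a) has_field_derivative 2 * y / a) (at y within {0..x})" for y
      using a by (auto intro!: derivative_eq_intros)
  qed
  then have "((\<lambda>y. a ^ (k + 1) / 2 * ((2 * y / a) *\<^sub>R ?f (y\<^sup>2 / a))) has_integral a ^ (k + 1) / 2 * integral {0..x\<^sup>2 / a} ?f) {0..x}"
    by (intro has_integral_mult_right) simp
  moreover have "(\<lambda>y. a ^ (k + 1) / 2 * ((2 * y / a) *\<^sub>R ?f (y\<^sup>2 / a))) = (\<lambda>y. y ^ (2 * k + 1) * exp (- y\<^sup>2 / a))"
    using a by (auto simp add: power_divide power_mult field_simps power2_eq_square)
  ultimately show ?thesis
    using lig_eq[of "x\<^sup>2 / a" k, symmetric] a by simp
qed



lemma summable_fact2: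
  fixes w :: real
  shows "summable (\<lambda>k. w ^ k / (fact k)\<^sup>2)"
proof (rule summable_comparison_test)
  show "summable (\<lambda>k. inverse (fact k) * \<bar>w\<bar> ^ k)" by (rule summable_exp)
  have "norm (w ^ k / (fact k)\<^sup>2) \<le> inverse (fact k) * \<bar>w\<bar> ^ k" for k
  proof -
    have f1: "(1::real) \<le> fact k" by simp
    have "norm (w ^ k / (fact k)\<^sup>2) = \<bar>w\<bar> ^ k / (fact k * fact k)"
      by (simp add: power_abs power2_eq_square)
    also have "\<dots> \<le> \<bar>w\<bar> ^ k / fact k"
      using f1 by (intro divide_left_mono) (auto simp: mult_le_cancel_left1)
    finally show ?thesis by (simp add: field_simps)
  qed
  then show "\<exists>N. \<forall>n\<ge>N. norm (w ^ n / (fact n)\<^sup>2) \<le> inverse (fact n) * \<bar>w\<bar> ^ n" by blast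
qed

lemma bessel_sums:
  "(\<lambda>k. (z / 2) ^ (2 * k) / (fact k)\<^sup>2) sums bessel_I0 z"
proof -
  have "summable (\<lambda>k. (z / 2) ^ (2 * k) / (fact k)\<^sup>2)"
    using summable_fact2[of "(z/2)^2"] by (simp add: power_mult)
  then show ?thesis unfolding bessel_I0_def by (rule summable_sums)
qed

lemma joint_sym: "fas_joint_pdf \<sigma> \<mu> x1 x2 = fas_joint_pdf \<sigma> \<mu> x2 x1"
  unfolding fas_joint_pdf_def by (simp add: ac_simps)

lemma J_sums:
  fixes \<sigma> \<mu> x :: real
  assumes \<sigma>: "\<sigma> > 0" and m0: "0 < \<mu>" and m1: "\<mu> < 1" and x: "x > 0"
  defines "a \<equiv> \<sigma>\<^sup>2 * (1 - \<mu>\<^sup>2)"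
  defines "C \<equiv> 4 * x / (\<sigma> ^ 4 * (1 - \<mu>\<^sup>2)) * exp (- x\<^sup>2 / a)"
  defines "b \<equiv> \<lambda>k. (\<mu> * x / a) ^ (2 * k) / (fact k)\<^sup>2"
  shows "(\<lambda>k. C * b k * (a ^ (k + 1) / 2 * lower_inc_gamma (real k + 1) (x\<^sup>2 / a)))
           sums integral {0..x} (\<lambda>y. fas_joint_pdf \<sigma> \<mu> x y)"
proof -
  have a: "a > 0" unfolding a_def using \<sigma> m0 m1 by (simp add: power_less_one_iff abs_square_less_1)
  have C: "C \<ge> 0" unfolding C_def using \<sigma> m0 m1 x by (simp add: abs_square_less_1 less_imp_le)
  have b: "b k \<ge> 0" for k unfolding b_def by simp
  define f where "f = (\<lambda>k y. C * b k * (y ^ (2 * k + 1) * exp (- y\<^sup>2 / a)))"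
  have pt: "fas_joint_pdf \<sigma> \<mu> x y = (\<Sum>k. f k y)" if y: "y \<in> {0..x}" for y
  proof -
    have bs: "(\<lambda>k. (\<mu> * x * y / a) ^ (2 * k) / (fact k)\<^sup>2) sums bessel_I0 (2 * \<mu> * x * y / a)"
      using bessel_sums[of "2 * \<mu> * x * y / a"] by (simp add: mult.assoc)
    have "(\<lambda>k. 4 * x * y / (\<sigma> ^ 4 * (1 - \<mu>\<^sup>2)) * exp (- (x\<^sup>2 + y\<^sup>2) / a) * ((\<mu> * x * y / a) ^ (2 * k) / (fact k)\<^sup>2))
        sums (4 * x * y / (\<sigma> ^ 4 * (1 - \<mu>\<^sup>2)) * exp (- (x\<^sup>2 + y\<^sup>2) / a) * bessel_I0 (2 * \<mu> * x * y / a))"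
      by (rule sums_mult[OF bs])
    moreover have "4 * x * y / (\<sigma> ^ 4 * (1 - \<mu>\<^sup>2)) * exp (- (x\<^sup>2 + y\<^sup>2) / a) * ((\<mu> * x * y / a) ^ (2 * k) / (fact k)\<^sup>2) = f k y" for k
    proof -
      have "exp (- (x\<^sup>2 + y\<^sup>2) / a) = exp (- x\<^sup>2 / a) * exp (- y\<^sup>2 / a)"
        by (simp add: exp_add[symmetric] add_divide_distrib diff_divide_distrib)
      then show ?thesis unfolding f_def C_def b_def
        by (simp add: power_mult_distrib power_divide field_simps power_add power_mult)
    qed
    ultimately have "(\<lambda>k. f k y) sums (4 * x * y / (\<sigma> ^ 4 * (1 - \<mu>\<^sup>2)) * exp (- (x\<^sup>2 + y\<^sup>2) / a) * bessel_I0 (2 * \<mu> * x * y / a))"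
      by simp
    moreover have "fas_joint_pdf \<sigma> \<mu> x y = 4 * x * y / (\<sigma> ^ 4 * (1 - \<mu>\<^sup>2)) * exp (- (x\<^sup>2 + y\<^sup>2) / a) * bessel_I0 (2 * \<mu> * x * y / a)"
      using x y unfolding fas_joint_pdf_def a_def by simp
    ultimately show ?thesis by (simp add: sums_iff)
  qed
  have I1: "integral {0..x} (\<lambda>y. fas_joint_pdf \<sigma> \<mu> x y) = integral {0..x} (\<lambda>y. \<Sum>k. f k y)"
    by (rule integral_cong) (use pt in auto)
  have bound: "\<bar>f k y\<bar> \<le> C * b k * x ^ (2 * k + 1)" if y: "y \<in> {0..x}" for k y
  proof -
    have "\<bar>f k y\<bar> = C * b k * (y ^ (2 * k + 1) * exp (- y\<^sup>2 / a))"
      unfolding f_def using C b[of k] y by (simp add: abs_mult)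
    also have "\<dots> \<le> C * b k * (x ^ (2 * k + 1) * 1)"
      using C b[of k] y a
      by (intro mult_left_mono mult_mono power_mono) (auto simp: mult_nonneg_nonneg)
    finally show ?thesis by simp
  qed
  have sm: "summable (\<lambda>k. C * b k * x ^ (2 * k + 1))"
  proof -
    have "summable (\<lambda>k. (C * x) * (((\<mu> * x / a)\<^sup>2 * x\<^sup>2) ^ k / (fact k)\<^sup>2))"
      by (intro summable_mult summable_fact2)
    moreover have "(C * x) * (((\<mu> * x / a)\<^sup>2 * x\<^sup>2) ^ k / (fact k)\<^sup>2) = C * b k * x ^ (2 * k + 1)" for k
      unfolding b_def by (simp add: power_mult_distrib power_mult[symmetric] power_add mult_ac)
    ultimately show ?thesis by simp
  qed
  have S: "(\<lambda>k. integral {0..x} (f k)) sums integral {0..x} (\<lambda>y. \<Sum>k. f k y)"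
    by (rule series_integral[OF _ bound sm]) (use a in \<open>auto simp: f_def intro!: continuous_intros\<close>)
  have IE: "integral {0..x} (f k) = C * b k * (a ^ (k + 1) / 2 * lower_inc_gamma (real k + 1) (x\<^sup>2 / a))" for k
    unfolding f_def
    by (rule integral_unique, rule has_integral_mult_right, rule subst_gamma) (use a x in auto)
  have "(\<lambda>k. integral {0..x} (f k)) = (\<lambda>k. C * b k * (a ^ (k + 1) / 2 * lower_inc_gamma (real k + 1) (x\<^sup>2 / a)))"
    using IE by (rule ext)
  then show ?thesis using S I1 by simp
qed


theorem corollary3:
  fixes \<sigma> \<mu> fD xth :: real
  assumes "\<sigma> > 0" and "0 < \<mu>" and "\<mu> < 1" and "fD > 0" and "xth > 0"
  shows "fas_lcr \<sigma> \<mu> fD xth =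
    2 * sqrt (2 * pi) * fD * xth / (\<sigma> ^ 3 * (1 - \<mu>\<^sup>2))
    * exp (- xth\<^sup>2 / (\<sigma>\<^sup>2 * (1 - \<mu>\<^sup>2)))
    * (\<Sum>k. (\<mu> * xth) ^ (2 * k) / ((fact k)\<^sup>2 * (\<sigma>\<^sup>2 * (1 - \<mu>\<^sup>2)) powi (int k - 1))
            * lower_inc_gamma (real k + 1) (xth\<^sup>2 / (\<sigma>\<^sup>2 * (1 - \<mu>\<^sup>2))))"
proof -
  note \<sigma> = assms(1) and m0 = assms(2) and m1 = assms(3) and fD = assms(4) and x = assms(5)
  define a where "a = \<sigma>\<^sup>2 * (1 - \<mu>\<^sup>2)"
  define C where "C = 4 * xth / (\<sigma> ^ 4 * (1 - \<mu>\<^sup>2)) * exp (- xth\<^sup>2 / a)"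
  define b where "b = (\<lambda>k. (\<mu> * xth / a) ^ (2 * k) / (fact k)\<^sup>2)"
  define J where "J = integral {0..xth} (\<lambda>y. fas_joint_pdf \<sigma> \<mu> xth y)"
  define t where "t = (\<lambda>k. (\<mu> * xth) ^ (2 * k) / ((fact k)\<^sup>2 * a powi (int k - 1)) * lower_inc_gamma (real k + 1) (xth\<^sup>2 / a))"
  define s where "s = pi * \<sigma> * fD"
  have m2: "\<mu>\<^sup>2 < 1" using m0 m1 by (simp add: abs_square_less_1)
  have a: "a > 0" unfolding a_def using \<sigma> m2 by simp
  have C: "C > 0" unfolding C_def using \<sigma> m2 x by simp
  have s: "s > 0" unfolding s_def using \<sigma> fD by simp
  have JS: "(\<lambda>k. C * b k * (a ^ (k + 1) / 2 * lower_inc_gamma (real k + 1) (xth\<^sup>2 / a))) sums J"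
    using J_sums[OF \<sigma> m0 m1 x] unfolding a_def C_def b_def J_def by simp
  have tk: "C * b k * (a ^ (k + 1) / 2 * lower_inc_gamma (real k + 1) (xth\<^sup>2 / a)) = C / 2 * t k" for k
  proof -
    have p: "a powi (int k - 1) = a ^ k / a" using a by (simp add: power_int_diff)
    have "(\<mu> * xth / a) ^ (2 * k) * a ^ (k + 1) = (\<mu> * xth) ^ (2 * k) * a / a ^ k"
      using a by (simp add: power_divide power_mult field_simps power2_eq_square power_add)
    moreover have "a ^ k * a ^ k = a ^ (k * 2)" by (simp add: power_add[symmetric] mult_2_right)
    ultimately show ?thesis unfolding b_def t_def p using a
      by (simp add: field_simps)
  qed
  have "(\<lambda>k. C / 2 * t k) sums J" using JS unfolding tk .
  then have "(\<lambda>k. 2 / C * (C / 2 * t k)) sums (2 / C * J)" by (rule sums_mult)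
  then have "t sums (2 / C * J)" using C by simp
  then have ST: "(\<Sum>k. t k) = 2 / C * J" by (simp add: sums_iff)
  have sym: "integral {0..xth} (\<lambda>x1. fas_joint_pdf \<sigma> \<mu> x1 xth) = J"
    unfolding J_def by (subst joint_sym) (rule refl)
  have sel: "xd * fas_sel_joint_pdf \<sigma> \<mu> fD xd xth = xd * normal_density 0 s xd * (2 * J)" for xd
    unfolding fas_sel_joint_pdf_def fas_deriv_pdf_def sym J_def[symmetric] s_def by simp
  have "fas_lcr \<sigma> \<mu> fD xth = integral {0..} (\<lambda>xd. xd * normal_density 0 s xd) * (2 * J)"
    unfolding fas_lcr_def sel by simp
  also have "\<dots> = s / sqrt (2 * pi) * (2 * J)"
    using half_normal_moment[OF s] by (simp add: integral_unique)
  finally have L: "fas_lcr \<sigma> \<mu> fD xth = s / sqrt (2 * pi) * (2 * J)" .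
  have r: "sqrt (2 * pi) * sqrt (2 * pi) = 2 * pi" by simp
  have "2 * sqrt (2 * pi) * fD * xth / (\<sigma> ^ 3 * (1 - \<mu>\<^sup>2)) * exp (- xth\<^sup>2 / a) * (2 / C * J)
        = s / sqrt (2 * pi) * (2 * J)"
  proof -
    define r where "r = sqrt (2 * pi)"
    have r0: "r > 0" unfolding r_def by simp
    have rr: "r * r = 2 * pi" unfolding r_def by simp
    define E where "E = exp (- xth\<^sup>2 / a)"
    have E: "E > 0" unfolding E_def by simp
    define m where "m = 1 - \<mu>\<^sup>2"
    have m: "m > 0" unfolding m_def using m2 by simp
    have l: "2 * r * fD * xth / (\<sigma> ^ 3 * m) * E * (2 / (4 * xth / (\<sigma> ^ 4 * m) * E) * J) = r * fD * \<sigma> * J"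
      using \<sigma> m x E by (simp add: field_simps power3_eq_cube power4_eq_xxxx)
    have rh: "pi * \<sigma> * fD / r * (2 * J) = r * fD * \<sigma> * J"
      using r0 rr by (simp add: field_simps)
    show ?thesis unfolding C_def s_def r_def[symmetric] E_def[symmetric] m_def[symmetric] l rh ..
  qed
  then show ?thesis using L ST unfolding t_def a_def by simp
qed


end
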